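(* Let $d\ge1$ and let $(\mathbf W,Y)$, $(\mathbf W',Y')$ be pairs (a random vector in $\mathbb R^d$, a real random variable) on a common probability space such that: $\mathbb E\mathbf W=0$ with invertible covariance matrix $\Sigma$; $\mathbb EY=0$, $\operatorname{Var}(Y)=\sigma_Y^2$; each coordinate of $\mathbf W$ is uncorrelated with $Y$; $(\mathbf W,Y,\mathbf W',Y')\overset d=(\mathbf W',Y',\mathbf W,Y)$; $Y$ takes values in $\zeta+\mathbb Z$ for some $\zeta\in[0,1)$; $\Delta Y:=Y'-Y\in\{-1,0,1\}$ a.s.; and $\mathbb P(\Delta Y=\pm1\mid\mathbf W,Y)=Q+R_{0,\pm}$ where $Q=\lambda\sigma_Y^2$ for some $\lambda\in(0,1)$ and $R_{0,\pm}$ are random variables. Then for every $1$-Lipschitz function $h:\mathbb R^d\to\mathbb R$ and every $k$ with $\mathbb P(Y=k)>0$ and $\mathbb P(Y=k-1)>0$, $$\Big|\mathbb E\big(h(\mathbf W)-h(\Sigma^{1/2}\mathbf Z)\big)\big(\mathbf 1_{Y=k}-\mathbf 1_{Y=k-1}\big)\Big|\le\frac1Q\mathbb E\big(|\Delta\mathbf W|\mathbf 1_{Y\in\{k-1,k\}}\big)+\frac1Q\mathbb E\Big(\big(|\mathbf W|+\sqrt{\operatorname{tr}\Sigma}\big)\big(|R_{0,+}|+|R_{0,-}|\big)\mathbf 1_{Y\in\{k-1,k\}}\Big),$$ where $\mathbf Z$ is a $d$-dimensional standard normal vector independent of everything else.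
   Context: $\Delta\mathbf W:=\mathbf W'-\mathbf W$; $|\cdot|$ denotes the Euclidean norm, and $1$-Lipschitz is with respect to it. *)

theory Defs
  imports "HOL-Analysis.Analysis" "HOL-Probability.Probability"
begin

definition psd_matrix :: "real^'n^'n \<Rightarrow> bool" where
  "psd_matrix A \<longleftrightarrow> transpose A = A \<and> (\<forall>x. 0 \<le> x \<bullet> (A *v x))"

definition matrix_sqrt :: "real^'n^'n \<Rightarrow> real^'n^'n" where
  "matrix_sqrt A = (THE S. psd_matrix S \<and> S ** S = A)"

end

theory Submission
  imports Defs
begin


lemma sym_dot: fixes A :: "real^'n^'n"
  assumes "transpose A = A" shows "x \<bullet> (A *v y) = (A *v x) \<bullet> y"
  by (metis assms dot_lmul_matrix transpose_matrix_vector)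

lemma quad_zero: fixes a b :: real
  assumes "\<And>t. a * t + b * t\<^sup>2 \<le> 0" shows "a = 0"
proof -
  define s where "s = \<bar>b\<bar> + 1"
  have s: "s > 0" "s + b > 0" unfolding s_def by auto
  have "a * (a/s) + b * (a/s)\<^sup>2 \<le> 0" by (rule assms)
  hence "a\<^sup>2 * (s + b) / s\<^sup>2 \<le> 0" using s by (simp add: field_simps power2_eq_square)
  hence "a\<^sup>2 * (s + b) \<le> 0" using s by (simp add: divide_le_0_iff)
  hence "a\<^sup>2 \<le> 0" using s by (simp add: mult_le_0_iff)
  thus ?thesis by simp
qed

lemma rayleigh:
  fixes A :: "real^'n^'n"
  assumes sym: "transpose A = A"
    and inv: "\<And>y. y \<in> V \<Longrightarrow> A *v y \<in> V"
    and V: "V = {y. \<forall>b\<in>B. b \<bullet> y = 0}"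
    and ne: "y0 \<in> V" "y0 \<noteq> 0"
  shows "\<exists>x\<in>V. norm x = 1 \<and> A *v x = (x \<bullet> (A *v x)) *\<^sub>R x"
proof -
  define q where "q = (\<lambda>z. z \<bullet> (A *v z))"
  have Vlin: "y + c *\<^sub>R z \<in> V" if "y \<in> V" "z \<in> V" for y z c
    using that unfolding V by (auto simp: inner_add_right)
  have Vsc: "c *\<^sub>R z \<in> V" if "z \<in> V" for z c
    using that unfolding V by (auto)
  define K where "K = V \<inter> sphere 0 1"
  have "V = (\<Inter>b\<in>B. {y. b \<bullet> y = 0})" unfolding V by auto
  then have "closed V" by (simp add: closed_INT closed_hyperplane)
  then have cK: "compact K" unfolding K_def by (simp add: closed_Int_compact)
  have "y0 /\<^sub>R norm y0 \<in> K" using ne Vsc unfolding K_def by auto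
  hence neK: "K \<noteq> {}" by auto
  have cq: "continuous_on K q" unfolding q_def
    by (intro continuous_intros continuous_on_compose2[OF _ continuous_on_id]) 
       (auto intro: linear_continuous_on bounded_linear_intros)
  obtain x where xK: "x \<in> K" and xmax: "\<And>z. z \<in> K \<Longrightarrow> q z \<le> q x"
    using continuous_attains_sup[OF cK neK cq] by blast
  have xV: "x \<in> V" and nx: "norm x = 1" using xK unfolding K_def by auto
  have xx: "x \<bullet> x = 1" using nx by (simp add: norm_eq_1)
  have qsc: "q (c *\<^sub>R z) = c\<^sup>2 * q z" for c z
    unfolding q_def by (simp add: matrix_vector_mult_scaleR power2_eq_square)
  have bound: "q z \<le> q x * (z \<bullet> z)" if "z \<in> V" for z
  proof (cases "z = 0")
    case True then show ?thesis by (simp add: q_def)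
  next
    case False
    have "z /\<^sub>R norm z \<in> K" using that False Vsc unfolding K_def by auto
    hence "q (z /\<^sub>R norm z) \<le> q x" by (rule xmax)
    hence "q z / (norm z)\<^sup>2 \<le> q x" by (simp add: qsc field_simps power2_eq_square)
    hence "q z \<le> q x * (norm z)\<^sup>2" using False by (simp add: divide_le_eq mult.commute)
    thus ?thesis by (simp add: power2_norm_eq_inner)
  qed
  have orth: "y \<bullet> (A *v x) = 0" if yV: "y \<in> V" and yx: "x \<bullet> y = 0" for y
  proof -
    have "y \<bullet> (A *v x) * 2 * t + (q y - q x * (y \<bullet> y)) * t\<^sup>2 \<le> 0" for t
    proof -
      have e1: "q (x + t *\<^sub>R y) \<le> q x * ((x + t *\<^sub>R y) \<bullet> (x + t *\<^sub>R y))"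
        by (rule bound[OF Vlin[OF xV yV]])
      have e2: "q (x + t *\<^sub>R y) = q x + 2 * t * (y \<bullet> (A *v x)) + t\<^sup>2 * q y"
      proof -
        have "x \<bullet> (A *v y) = y \<bullet> (A *v x)" using sym_dot[OF sym, of x y] by (simp add: inner_commute)
        thus ?thesis unfolding q_def
          by (simp add: matrix_vector_mult_scaleR matrix_vector_right_distrib inner_add_left inner_add_right
              power2_eq_square algebra_simps)
      qed
      have e3: "(x + t *\<^sub>R y) \<bullet> (x + t *\<^sub>R y) = 1 + t\<^sup>2 * (y \<bullet> y)"
        using xx yx by (simp add: inner_add_left inner_add_right inner_commute power2_eq_square)
      have "q x + 2 * t * (y \<bullet> (A *v x)) + t\<^sup>2 * q y \<le> q x * (1 + t\<^sup>2 * (y \<bullet> y))"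
        using e1 unfolding e2 e3 .
      thus ?thesis by (simp add: algebra_simps)
    qed
    thus ?thesis using quad_zero[of "y \<bullet> (A *v x) * 2" "q y - q x * (y \<bullet> y)"] by simp
  qed
  define w where "w = A *v x - q x *\<^sub>R x"
  have wV: "w \<in> V" unfolding w_def using Vlin[OF inv[OF xV] xV, of "- q x"] by simp
  have wx: "x \<bullet> w = 0" unfolding w_def using xx by (simp add: inner_diff_right q_def)
  have "w \<bullet> w = w \<bullet> (A *v x) - q x * (w \<bullet> x)" unfolding w_def
    by (simp add: inner_diff_right)
  also have "\<dots> = 0" using orth[OF wV wx] wx by (simp add: inner_commute)
  finally have "w = 0" by simp
  thus ?thesis using xV nx unfolding w_def q_def by (intro bexI[of _ x]) auto
qed



lemma psd_zero: fixes S :: "real^'n^'n"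
  assumes sym: "transpose S = S" and pos: "\<And>x. 0 \<le> x \<bullet> (S *v x)" and v: "v \<bullet> (S *v v) = 0"
  shows "S *v v = 0"
proof -
  define y where "y = S *v v"
  have "(- 2 * (y \<bullet> (S *v v))) * t + (- (y \<bullet> (S *v y))) * t\<^sup>2 \<le> 0" for t
  proof -
    have "0 \<le> (v + t *\<^sub>R y) \<bullet> (S *v (v + t *\<^sub>R y))" by (rule pos)
    moreover have "v \<bullet> (S *v y) = y \<bullet> (S *v v)" using sym_dot[OF sym, of v y] by (simp add: inner_commute)
    ultimately show ?thesis using v
      by (simp add: matrix_vector_mult_scaleR matrix_vector_right_distrib inner_add_left inner_add_right
              power2_eq_square algebra_simps)
  qed
  hence "- 2 * (y \<bullet> (S *v v)) = 0" by (rule quad_zero)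
  hence "y \<bullet> y = 0" unfolding y_def by simp
  thus ?thesis unfolding y_def by simp
qed

lemma trace_inner: fixes M :: "real^'n^'n"
  shows "trace M = (\<Sum>i\<in>UNIV. axis i 1 \<bullet> (M *v axis i 1))"
  unfolding trace_def
  by (simp add: matrix_vector_mult_basis column_def inner_axis')

lemma cols_eq: fixes S T :: "real^'n^'m"
  assumes "\<And>i. S *v axis i 1 = T *v axis i 1" shows "S = T"
proof -
  have "column i S = column i T" for i using assms[of i] by (simp add: matrix_vector_mult_basis)
  thus ?thesis by (simp add: vec_eq_iff column_def) 
qed

lemma psd_sqrt_unique: fixes S T :: "real^'n^'n"
  assumes S: "psd_matrix S" and T: "psd_matrix T" and eq: "S ** S = T ** T"
  shows "S = T"
proof -
  have sS: "transpose S = S" and pS: "\<And>x. 0 \<le> x \<bullet> (S *v x)" using S unfolding psd_matrix_def by auto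
  have sT: "transpose T = T" and pT: "\<And>x. 0 \<le> x \<bullet> (T *v x)" using T unfolding psd_matrix_def by auto
  define D where "D = S - T"
  have sD: "transpose D = D" unfolding D_def using sS sT by (simp add: transpose_def vec_eq_iff)
  have Dv: "D *v x = S *v x - T *v x" for x unfolding D_def by (simp add: matrix_vector_mult_diff_rdistrib)
  have zero: "S ** D + D ** T = 0"
  proof -
    have "(S ** D + D ** T) *v x = 0 *v x" for x
    proof -
      have "(S ** S) *v x = (T ** T) *v x" using eq by simp
      hence "S *v (S *v x) = T *v (T *v x)" by (simp add: matrix_vector_mul_assoc)
      thus ?thesis
        by (simp add: matrix_vector_mult_add_rdistrib matrix_vector_mul_assoc[symmetric] Dv
             matrix_vector_mult_diff_distrib)
    qed
    thus ?thesis using matrix_eq by blast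
  qed
  have "trace (D ** (T ** D)) = trace (D ** (D ** T))"
    by (metis trace_mul_sym matrix_mul_assoc)
  hence "trace (D ** (S ** D)) + trace (D ** (T ** D)) = trace (D ** (S ** D + D ** T))"
    by (simp add: matrix_add_ldistrib trace_add)
  also have "\<dots> = 0" using zero by (simp add: trace_def)
  finally have tr0: "trace (D ** (S ** D)) + trace (D ** (T ** D)) = 0" .
  define f where "f i = D *v axis i 1" for i
  have tr: "trace (D ** (X ** D)) = (\<Sum>i\<in>UNIV. f i \<bullet> (X *v f i))" for X
    unfolding trace_inner f_def
    by (simp add: matrix_vector_mul_assoc[symmetric] sym_dot[OF sD])
  have "(\<Sum>i\<in>UNIV. f i \<bullet> (S *v f i) + f i \<bullet> (T *v f i)) = 0"
    using tr0 unfolding tr by (simp add: sum.distrib)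
  hence all0: "\<forall>i\<in>UNIV. f i \<bullet> (S *v f i) + f i \<bullet> (T *v f i) = 0"
    by (subst sum_nonneg_eq_0_iff[symmetric]) (auto intro: add_nonneg_nonneg pS pT)
  have "D *v axis i 1 = 0" for i
  proof -
    have "f i \<bullet> (S *v f i) + f i \<bullet> (T *v f i) = 0" using all0 by simp
    hence a: "f i \<bullet> (S *v f i) = 0" "f i \<bullet> (T *v f i) = 0" using pS[of "f i"] pT[of "f i"] by linarith+
    have "S *v f i = 0" "T *v f i = 0" using psd_zero[OF sS pS a(1)] psd_zero[OF sT pT a(2)] by auto
    hence "D *v f i = 0" by (simp add: Dv)
    hence "axis i 1 \<bullet> (D *v f i) = 0" by simp
    hence "f i \<bullet> f i = 0" unfolding f_def by (simp add: sym_dot[OF sD])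
    thus ?thesis unfolding f_def by simp
  qed
  thus ?thesis by (intro cols_eq) (simp add: Dv)
qed



definition oeig :: "real^'n^'n \<Rightarrow> (real^'n) set \<Rightarrow> bool" where
  "oeig A B \<longleftrightarrow> finite B \<and> (\<forall>b\<in>B. norm b = 1 \<and> A *v b = (b \<bullet> (A *v b)) *\<^sub>R b)
     \<and> (\<forall>b\<in>B. \<forall>c\<in>B. b \<noteq> c \<longrightarrow> b \<bullet> c = 0)"

lemma oeig_card: fixes A :: "real^'n^'n" assumes "oeig A B" shows "card B < DIM(real^'n) + 1"
proof -
  have "pairwise orthogonal B" using assms unfolding oeig_def pairwise_def orthogonal_def by auto
  moreover have "0 \<notin> B" using assms unfolding oeig_def by force
  ultimately have "independent B" by (rule pairwise_orthogonal_independent)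
  hence "card B \<le> DIM(real^'n)" using independent_bound[of B] by blast
  thus ?thesis by simp
qed

lemma orth_expand: fixes B :: "(real^'n) set"
  assumes "oeig A B" "c \<in> B" shows "c \<bullet> (\<Sum>b\<in>B. (b \<bullet> v) *\<^sub>R b) = c \<bullet> v"
proof -
  have fin: "finite B" and o: "\<And>b. b \<in> B \<Longrightarrow> b \<noteq> c \<Longrightarrow> c \<bullet> b = 0" and n: "norm c = 1"
    using assms unfolding oeig_def by auto
  have cc: "c \<bullet> c = 1" using n by (simp add: norm_eq_1)
  have "c \<bullet> (\<Sum>b\<in>B. (b \<bullet> v) *\<^sub>R b) = (\<Sum>b\<in>B. (b \<bullet> v) * (c \<bullet> b))"
    by (simp add: inner_sum_right)
  also have "\<dots> = (c \<bullet> v) * (c \<bullet> c)"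
    using fin assms(2) o by (subst sum.remove[of _ c]) auto
  finally show ?thesis using cc by simp
qed

lemma eigenbasis:
  fixes A :: "real^'n^'n"
  assumes sym: "transpose A = A"
  shows "\<exists>B. oeig A B \<and> (\<forall>v. v = (\<Sum>b\<in>B. (b \<bullet> v) *\<^sub>R b))"
proof -
  have "oeig A {}" unfolding oeig_def by auto
  then obtain B where B: "oeig A B" and Bmax: "\<And>C. oeig A C \<Longrightarrow> card C \<le> card B"
    using ex_has_greatest_nat[of "oeig A" "{}" card "DIM(real^'n) + 1"] oeig_card by blast
  have fin: "finite B" and Be: "\<And>b. b \<in> B \<Longrightarrow> A *v b = (b \<bullet> (A *v b)) *\<^sub>R b"
    using B unfolding oeig_def by auto
  define V where "V = {y. \<forall>b\<in>B. b \<bullet> y = 0}"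
  have inv: "A *v y \<in> V" if "y \<in> V" for y
  proof -
    have "b \<bullet> (A *v y) = 0" if "b \<in> B" for b
    proof -
      have "b \<bullet> (A *v y) = (A *v b) \<bullet> y" by (rule sym_dot[OF sym])
      also have "\<dots> = (b \<bullet> (A *v b)) * (b \<bullet> y)" by (subst Be[OF \<open>b \<in> B\<close>]) simp
      also have "\<dots> = 0" using \<open>y \<in> V\<close> \<open>b \<in> B\<close> unfolding V_def by simp
      finally show ?thesis .
    qed
    thus ?thesis unfolding V_def by auto
  qed
  have "v = (\<Sum>b\<in>B. (b \<bullet> v) *\<^sub>R b)" for v
  proof (rule ccontr)
    assume ne: "v \<noteq> (\<Sum>b\<in>B. (b \<bullet> v) *\<^sub>R b)"
    define r where "r = v - (\<Sum>b\<in>B. (b \<bullet> v) *\<^sub>R b)"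
    have rV: "r \<in> V" unfolding V_def r_def using orth_expand[OF B] by (simp add: inner_diff_right)
    have "r \<noteq> 0" using ne unfolding r_def by simp
    then obtain x where xV: "x \<in> V" and nx: "norm x = 1" and ex: "A *v x = (x \<bullet> (A *v x)) *\<^sub>R x"
      using rayleigh[OF sym inv V_def rV] by blast
    have xx: "x \<bullet> x = 1" using nx by (simp add: norm_eq_1)
    have xB: "x \<notin> B" using xV xx unfolding V_def by force
    have "oeig A (insert x B)"
      using B nx ex xV unfolding oeig_def V_def by (auto simp: inner_commute)
    hence "card (insert x B) \<le> card B" by (rule Bmax)
    thus False using xB fin by simp
  qed
  thus ?thesis using B by blast
qed

lemma outer_mv: fixes b :: "real^'n"
  shows "(\<chi> i j. b $ i * b $ j) *v x = (b \<bullet> x) *\<^sub>R b"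
  by (simp add: vec_eq_iff matrix_vector_mult_def inner_vec_def sum_distrib_left sum_distrib_right)
     (auto intro: sum.cong simp: mult_ac)

lemma mv_sum: fixes M :: "real^'n^'m"
  shows "M *v (sum f I) = (\<Sum>i\<in>I. M *v f i)"
  by (induction I rule: infinite_finite_induct) (auto simp: matrix_vector_right_distrib)

lemma sum_mv: fixes M :: "'i \<Rightarrow> real^'n^'m"
  shows "(sum M I) *v x = (\<Sum>i\<in>I. M i *v x)"
  by (induction I rule: infinite_finite_induct) (auto simp: matrix_vector_mult_add_rdistrib)

lemma psd_sqrt_exists: fixes A :: "real^'n^'n"
  assumes A: "psd_matrix A" shows "\<exists>S. psd_matrix S \<and> S ** S = A"
proof -
  have sym: "transpose A = A" and pos: "\<And>x. 0 \<le> x \<bullet> (A *v x)" using A unfolding psd_matrix_def by auto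
  obtain B where B: "oeig A B" and exp: "\<And>v. v = (\<Sum>b\<in>B. (b \<bullet> v) *\<^sub>R b)"
    using eigenbasis[OF sym] by blast
  have fin: "finite B" and Be: "\<And>b. b \<in> B \<Longrightarrow> A *v b = (b \<bullet> (A *v b)) *\<^sub>R b"
    using B unfolding oeig_def by auto
  define m where "m b = b \<bullet> (A *v b)" for b
  have Be': "A *v b = m b *\<^sub>R b" if "b \<in> B" for b using Be[OF that] unfolding m_def .
  define S :: "real^'n^'n" where "S = (\<Sum>b\<in>B. sqrt (m b) *\<^sub>R (\<chi> i j. b $ i * b $ j))"
  have Sv: "S *v x = (\<Sum>b\<in>B. (sqrt (m b) * (b \<bullet> x)) *\<^sub>R b)" for x
    unfolding S_def sum_mv by (simp add: scaleR_matrix_vector_assoc[symmetric] outer_mv)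
  have Av: "A *v x = (\<Sum>b\<in>B. (m b * (b \<bullet> x)) *\<^sub>R b)" for x
  proof -
    have "A *v x = A *v (\<Sum>b\<in>B. (b \<bullet> x) *\<^sub>R b)" using arg_cong[OF exp[of x], of "(*v) A"] .
    also have "\<dots> = (\<Sum>b\<in>B. (b \<bullet> x) *\<^sub>R (A *v b))"
      by (simp add: mv_sum matrix_vector_mult_scaleR)
    also have "\<dots> = (\<Sum>b\<in>B. (m b * (b \<bullet> x)) *\<^sub>R b)"
      by (intro sum.cong refl) (simp add: Be')
    finally show ?thesis .
  qed
  have sS: "transpose S = S"
    unfolding S_def by (simp add: vec_eq_iff transpose_def sum_component mult.commute)
  have pS: "0 \<le> x \<bullet> (S *v x)" for x
    unfolding Sv inner_sum_right
  proof (intro sum_nonneg)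
    fix b assume "b \<in> B"
    have "0 \<le> m b" unfolding m_def by (rule pos)
    thus "0 \<le> x \<bullet> ((sqrt (m b) * (b \<bullet> x)) *\<^sub>R b)"
      by (auto simp: inner_commute mult.assoc intro!: mult_nonneg_nonneg)
  qed
  have SS: "S ** S = A"
  proof -
    have "(S ** S) *v x = A *v x" for x
    proof -
      have c: "c \<bullet> (S *v x) = sqrt (m c) * (c \<bullet> x)" if "c \<in> B" for c
      proof -
        have "c \<bullet> (S *v x) = sqrt (m c) * (c \<bullet> (\<Sum>b\<in>B. (b \<bullet> x) *\<^sub>R b))"
        proof -
          have "c \<bullet> (S *v x) = (\<Sum>b\<in>B. sqrt (m b) * (b \<bullet> x) * (c \<bullet> b))"
            unfolding Sv by (simp add: inner_sum_right)
          also have "\<dots> = (\<Sum>b\<in>B. sqrt (m c) * ((b \<bullet> x) * (c \<bullet> b)))"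
          proof (intro sum.cong refl)
            fix b assume "b \<in> B"
            show "sqrt (m b) * (b \<bullet> x) * (c \<bullet> b) = sqrt (m c) * ((b \<bullet> x) * (c \<bullet> b))"
              using B \<open>b \<in> B\<close> \<open>c \<in> B\<close> unfolding oeig_def by (cases "b = c") auto
          qed
          also have "\<dots> = sqrt (m c) * (c \<bullet> (\<Sum>b\<in>B. (b \<bullet> x) *\<^sub>R b))"
            by (simp add: inner_sum_right sum_distrib_left)
          finally show ?thesis .
        qed
        thus ?thesis using orth_expand[OF B that] by simp
      qed
      have "(S ** S) *v x = S *v (S *v x)" by (simp add: matrix_vector_mul_assoc)
      also have "\<dots> = (\<Sum>b\<in>B. (sqrt (m b) * (sqrt (m b) * (b \<bullet> x))) *\<^sub>R b)"
        unfolding Sv[of "S *v x"] by (intro sum.cong refl) (simp add: c)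
      also have "\<dots> = (\<Sum>b\<in>B. (m b * (b \<bullet> x)) *\<^sub>R b)"
      proof (intro sum.cong refl)
        fix b assume "b \<in> B"
        have "0 \<le> m b" unfolding m_def by (rule pos)
        thus "(sqrt (m b) * (sqrt (m b) * (b \<bullet> x))) *\<^sub>R b = (m b * (b \<bullet> x)) *\<^sub>R b"
          by (simp add: mult.assoc[symmetric])
      qed
      also have "\<dots> = A *v x" by (simp add: Av)
      finally show ?thesis .
    qed
    thus ?thesis using matrix_eq by blast
  qed
  show ?thesis using sS pS SS unfolding psd_matrix_def by blast
qed

lemma matrix_sqrt_props: fixes A :: "real^'n^'n"
  assumes "psd_matrix A"
  shows "psd_matrix (matrix_sqrt A) \<and> matrix_sqrt A ** matrix_sqrt A = A"
proof -
  obtain S where S: "psd_matrix S \<and> S ** S = A" using psd_sqrt_exists[OF assms] by blast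
  have "\<exists>!S. psd_matrix S \<and> S ** S = A"
    using S psd_sqrt_unique by (intro ex1I[of _ S]) auto
  thus ?thesis unfolding matrix_sqrt_def by (rule theI')
qed



lemma subalg_WY:
  fixes W :: "'a \<Rightarrow> real^'d" and Y :: "'a \<Rightarrow> real"
  assumes "prob_space M" "W \<in> borel_measurable M" "Y \<in> borel_measurable M"
  shows "sigma_finite_subalgebra M (vimage_algebra (space M) (\<lambda>x. (W x, Y x)) borel)"
proof -
  interpret prob_space M by fact
  have m: "(\<lambda>x. (W x, Y x)) \<in> M \<rightarrow>\<^sub>M borel"
    unfolding borel_prod[symmetric] using assms(2,3) by (rule measurable_Pair)
  have "subalgebra M (vimage_algebra (space M) (\<lambda>x. (W x, Y x)) borel)"
    unfolding subalgebra_def using m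
    by (auto simp: sets_vimage_algebra2 measurable_def)
  thus ?thesis by (intro finite_measure_subalgebra_is_sigma_finite) (unfold_locales)
qed

lemma core:
  fixes M :: "'a measure"
    and W W' :: "'a \<Rightarrow> real^'d"
    and Y Y' Rp Rm :: "'a \<Rightarrow> real"
    and g :: "real^'d \<Rightarrow> real" and Q k :: real
  assumes M: "prob_space M"
    and meas[measurable]: "W \<in> borel_measurable M" "W' \<in> borel_measurable M"
              "Y \<in> borel_measurable M" "Y' \<in> borel_measurable M"
              "Rp \<in> borel_measurable M" "Rm \<in> borel_measurable M"
    and gm[measurable]: "g \<in> borel_measurable borel"
    and glip: "\<And>a b. \<bar>g a - g b\<bar> \<le> norm (a - b)"
    and gi: "integrable M (\<lambda>x. g (W x))"
    and exch: "distr M borel (\<lambda>x. (W x, Y x, W' x, Y' x))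
               = distr M borel (\<lambda>x. (W' x, Y' x, W x, Y x))"
    and cond_p: "AE x in M. real_cond_exp M (vimage_algebra (space M) (\<lambda>x. (W x, Y x)) borel)
                   (indicator {x \<in> space M. Y' x - Y x = 1}) x = Q + Rp x"
    and cond_m: "AE x in M. real_cond_exp M (vimage_algebra (space M) (\<lambda>x. (W x, Y x)) borel)
                   (indicator {x \<in> space M. Y' x - Y x = -1}) x = Q + Rm x"
  shows "ennreal (\<bar>Q * integral\<^sup>L M (\<lambda>x. g (W x) *
                 ((if Y x = k then 1 else 0) - (if Y x = k - 1 then 1 else 0)))\<bar>)
           \<le> (\<integral>\<^sup>+ x. ennreal (norm (W' x - W x) * (if Y x \<in> {k - 1, k} then 1 else 0)) \<partial>M)
             + (\<integral>\<^sup>+ x. ennreal (\<bar>g (W x)\<bar> * (\<bar>Rp x\<bar> + \<bar>Rm x\<bar>) * (if Y x \<in> {k - 1, k} then 1 else 0)) \<partial>M)"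
proof -
  interpret prob_space M by fact
  define F where "F = vimage_algebra (space M) (\<lambda>x. (W x, Y x)) borel"
  interpret F: sigma_finite_subalgebra M F unfolding F_def by (rule subalg_WY[OF M meas(1,3)])
  have WYF: "(\<lambda>x. (W x, Y x)) \<in> F \<rightarrow>\<^sub>M borel" unfolding F_def
    by (rule measurable_vimage_algebra1) simp
  define f1 where "f1 x = g (W x) * (if Y x = k - 1 then 1 else 0)" for x
  define f2 where "f2 x = g (W x) * (if Y x = k then 1 else 0)" for x
  define ip :: "'a \<Rightarrow> real" where "ip = indicator {x \<in> space M. Y' x - Y x = 1}"
  define im :: "'a \<Rightarrow> real" where "im = indicator {x \<in> space M. Y' x - Y x = -1}"
  have ipm[measurable]: "ip \<in> borel_measurable M" "im \<in> borel_measurable M"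
    unfolding ip_def im_def by measurable
  have f1F: "f1 \<in> borel_measurable F"
  proof -
    have "(\<lambda>p::(real^'d) \<times> real. g (fst p) * (if snd p = k - 1 then 1 else 0)) \<in> borel_measurable borel"
      unfolding borel_prod[symmetric] by measurable
    from measurable_comp[OF WYF this] show ?thesis by (simp add: f1_def[abs_def] comp_def)
  qed
  have f2F: "f2 \<in> borel_measurable F"
  proof -
    have "(\<lambda>p::(real^'d) \<times> real. g (fst p) * (if snd p = k then 1 else 0)) \<in> borel_measurable borel"
      unfolding borel_prod[symmetric] by measurable
    from measurable_comp[OF WYF this] show ?thesis by (simp add: f2_def[abs_def] comp_def)
  qed
  have f1i: "integrable M f1" unfolding f1_def
    by (rule Bochner_Integration.integrable_bound[OF gi]) (auto simp: f1_def)
  have f2i: "integrable M f2" unfolding f2_def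
    by (rule Bochner_Integration.integrable_bound[OF gi]) (auto simp: f2_def)
  have f1ipi: "integrable M (\<lambda>x. f1 x * ip x)"
    by (rule Bochner_Integration.integrable_bound[OF gi]) (auto simp: f1_def ip_def indicator_def)
  have f2imi: "integrable M (\<lambda>x. f2 x * im x)"
    by (rule Bochner_Integration.integrable_bound[OF gi]) (auto simp: f2_def im_def indicator_def)
  have ce1: "integrable M (\<lambda>x. f1 x * real_cond_exp M F ip x)"
            "integral\<^sup>L M (\<lambda>x. f1 x * real_cond_exp M F ip x) = integral\<^sup>L M (\<lambda>x. f1 x * ip x)"
    using F.real_cond_exp_intg[OF f1ipi f1F ipm(1)] by auto
  have ce2: "integrable M (\<lambda>x. f2 x * real_cond_exp M F im x)"
            "integral\<^sup>L M (\<lambda>x. f2 x * real_cond_exp M F im x) = integral\<^sup>L M (\<lambda>x. f2 x * im x)"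
    using F.real_cond_exp_intg[OF f2imi f2F ipm(2)] by auto
  have ae1: "AE x in M. f1 x * real_cond_exp M F ip x = f1 x * (Q + Rp x)"
    using cond_p unfolding F_def ip_def by eventually_elim simp
  have ae2: "AE x in M. f2 x * real_cond_exp M F im x = f2 x * (Q + Rm x)"
    using cond_m unfolding F_def im_def by eventually_elim simp
  have fM[measurable]: "f1 \<in> borel_measurable M" "f2 \<in> borel_measurable M"
    unfolding f1_def[abs_def] f2_def[abs_def] by measurable
  have i1: "integrable M (\<lambda>x. f1 x * (Q + Rp x))"
    by (rule integrable_cong_AE_imp[OF ce1(1) _ ae1]) measurable
  have i2: "integrable M (\<lambda>x. f2 x * (Q + Rm x))"
    by (rule integrable_cong_AE_imp[OF ce2(1) _ ae2]) measurable
  have T1: "integral\<^sup>L M (\<lambda>x. f1 x * (Q + Rp x)) = integral\<^sup>L M (\<lambda>x. f1 x * ip x)"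
    using ce1(2) integral_cong_AE[OF _ _ ae1] by simp
  have T2: "integral\<^sup>L M (\<lambda>x. f2 x * (Q + Rm x)) = integral\<^sup>L M (\<lambda>x. f2 x * im x)"
    using ce2(2) integral_cong_AE[OF _ _ ae2] by simp
  define V where "V x = (W x, Y x, W' x, Y' x)" for x
  define V' where "V' x = (W' x, Y' x, W x, Y x)" for x
  have VM: "V \<in> M \<rightarrow>\<^sub>M borel" "V' \<in> M \<rightarrow>\<^sub>M borel"
    unfolding V_def[abs_def] V'_def[abs_def] borel_prod[symmetric] by measurable
  define \<psi> where "\<psi> = (\<lambda>(w::real^'d, y::real, w'::real^'d, y'::real). g w * (if y = k - 1 \<and> y' = k then 1 else 0))"
  have \<psi>m: "\<psi> \<in> borel_measurable borel"
    unfolding \<psi>_def borel_prod[symmetric] by measurable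
  have exch': "distr M borel V = distr M borel V'" using exch unfolding V_def[abs_def] V'_def[abs_def] .
  have e1: "integral\<^sup>L M (\<lambda>x. f1 x * ip x) = integral\<^sup>L M (\<lambda>x. \<psi> (V x))"
    by (rule Bochner_Integration.integral_cong[OF refl]) (auto simp: f1_def ip_def \<psi>_def V_def)
  have e1i: "integrable M (\<lambda>x. \<psi> (V x))"
  proof -
    have "integrable M (\<lambda>x. f1 x * ip x) \<longleftrightarrow> integrable M (\<lambda>x. \<psi> (V x))"
      by (rule Bochner_Integration.integrable_cong[OF refl]) (auto simp: f1_def ip_def \<psi>_def V_def)
    thus ?thesis using f1ipi by simp
  qed
  have e2: "integral\<^sup>L M (\<lambda>x. \<psi> (V x)) = integral\<^sup>L M (\<lambda>x. \<psi> (V' x))"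
    by (metis exch' integral_distr[OF VM(1) \<psi>m] integral_distr[OF VM(2) \<psi>m])
  have e2i: "integrable M (\<lambda>x. \<psi> (V' x))"
    using e1i by (metis exch' integrable_distr_eq[OF VM(1) \<psi>m] integrable_distr_eq[OF VM(2) \<psi>m])
  define G1 where "G1 x = g (W' x) * (if Y x = k \<and> Y' x = k - 1 then 1 else 0)" for x
  define G2 where "G2 x = g (W x) * (if Y x = k \<and> Y' x = k - 1 then 1 else 0)" for x
  have e3: "(\<lambda>x. \<psi> (V' x)) = G1" by (auto simp: \<psi>_def V'_def G1_def fun_eq_iff)
  have G1i: "integrable M G1" using e2i e3 by simp
  have e4: "integral\<^sup>L M (\<lambda>x. f2 x * im x) = integral\<^sup>L M G2"
    by (rule Bochner_Integration.integral_cong[OF refl]) (auto simp: f2_def im_def G2_def)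
  have G2i: "integrable M G2"
  proof -
    have "integrable M (\<lambda>x. f2 x * im x) \<longleftrightarrow> integrable M G2"
      by (rule Bochner_Integration.integrable_cong[OF refl]) (auto simp: f2_def im_def G2_def)
    thus ?thesis using f2imi by simp
  qed
  define D where "D = integral\<^sup>L M (\<lambda>x. f1 x * ip x) - integral\<^sup>L M (\<lambda>x. f2 x * im x)"
  have D: "D = integral\<^sup>L M (\<lambda>x. G1 x - G2 x)"
    unfolding D_def e1 e2 e3 e4 using G1i G2i by simp
  have Dbound: "ennreal \<bar>D\<bar> \<le> (\<integral>\<^sup>+ x. ennreal (norm (W' x - W x) * (if Y x \<in> {k - 1, k} then 1 else 0)) \<partial>M)"
  proof -
    have "ennreal \<bar>D\<bar> \<le> (\<integral>\<^sup>+ x. ennreal (norm (G1 x - G2 x)) \<partial>M)"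
      unfolding D using integral_norm_bound_ennreal[OF Bochner_Integration.integrable_diff[OF G1i G2i]] by simp
    also have "\<dots> \<le> (\<integral>\<^sup>+ x. ennreal (norm (W' x - W x) * (if Y x \<in> {k - 1, k} then 1 else 0)) \<partial>M)"
    proof (intro nn_integral_mono ennreal_leI)
      fix x
      have "\<bar>g (W' x) - g (W x)\<bar> \<le> norm (W' x - W x)" by (rule glip)
      thus "norm (G1 x - G2 x) \<le> norm (W' x - W x) * (if Y x \<in> {k - 1, k} then 1 else 0)"
        by (auto simp: G1_def G2_def)
    qed
    finally show ?thesis .
  qed
  have i1': "integrable M (\<lambda>x. f1 x * Rp x)"
  proof -
    have "integrable M (\<lambda>x. f1 x * (Q + Rp x) - Q * f1 x)" using i1 f1i by simp
    thus ?thesis by (simp add: algebra_simps)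
  qed
  have i2': "integrable M (\<lambda>x. f2 x * Rm x)"
  proof -
    have "integrable M (\<lambda>x. f2 x * (Q + Rm x) - Q * f2 x)" using i2 f2i by simp
    thus ?thesis by (simp add: algebra_simps)
  qed
  have T1': "integral\<^sup>L M (\<lambda>x. f1 x * ip x) = Q * integral\<^sup>L M f1 + integral\<^sup>L M (\<lambda>x. f1 x * Rp x)"
    unfolding T1[symmetric] using f1i i1' by (simp add: distrib_left mult.commute)
  have T2': "integral\<^sup>L M (\<lambda>x. f2 x * im x) = Q * integral\<^sup>L M f2 + integral\<^sup>L M (\<lambda>x. f2 x * Rm x)"
    unfolding T2[symmetric] using f2i i2' by (simp add: distrib_left mult.commute)
  define E where "E = integral\<^sup>L M (\<lambda>x. f1 x * Rp x - f2 x * Rm x)"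
  have L: "integral\<^sup>L M (\<lambda>x. g (W x) * ((if Y x = k then 1 else 0) - (if Y x = k - 1 then 1 else 0)))
      = integral\<^sup>L M f2 - integral\<^sup>L M f1"
  proof -
    have "integral\<^sup>L M (\<lambda>x. g (W x) * ((if Y x = k then 1 else 0) - (if Y x = k - 1 then 1 else 0)))
       = integral\<^sup>L M (\<lambda>x. f2 x - f1 x)" by (simp add: f1_def f2_def algebra_simps)
    thus ?thesis using f1i f2i by simp
  qed
  have QL: "Q * integral\<^sup>L M (\<lambda>x. g (W x) * ((if Y x = k then 1 else 0) - (if Y x = k - 1 then 1 else 0)))
      = E - D"
    unfolding L E_def D_def T1' T2' using i1' i2' by (simp add: algebra_simps)
  have Ebound: "ennreal \<bar>E\<bar> \<le> (\<integral>\<^sup>+ x. ennreal (\<bar>g (W x)\<bar> * (\<bar>Rp x\<bar> + \<bar>Rm x\<bar>) * (if Y x \<in> {k - 1, k} then 1 else 0)) \<partial>M)"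
  proof -
    have "ennreal \<bar>E\<bar> \<le> (\<integral>\<^sup>+ x. ennreal (norm (f1 x * Rp x - f2 x * Rm x)) \<partial>M)"
      unfolding E_def using integral_norm_bound_ennreal[OF Bochner_Integration.integrable_diff[OF i1' i2']] by simp
    also have "\<dots> \<le> (\<integral>\<^sup>+ x. ennreal (\<bar>g (W x)\<bar> * (\<bar>Rp x\<bar> + \<bar>Rm x\<bar>) * (if Y x \<in> {k - 1, k} then 1 else 0)) \<partial>M)"
    proof (intro nn_integral_mono ennreal_leI)
      fix x
      show "norm (f1 x * Rp x - f2 x * Rm x) \<le> \<bar>g (W x)\<bar> * (\<bar>Rp x\<bar> + \<bar>Rm x\<bar>) * (if Y x \<in> {k - 1, k} then 1 else 0)"
        by (auto simp: f1_def f2_def abs_mult distrib_left)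
    qed
    finally show ?thesis .
  qed
  have "ennreal \<bar>E - D\<bar> \<le> ennreal (\<bar>D\<bar> + \<bar>E\<bar>)"
    by (rule ennreal_leI) linarith
  also have "\<dots> = ennreal \<bar>D\<bar> + ennreal \<bar>E\<bar>" by (rule ennreal_plus) auto
  also have "\<dots> \<le> (\<integral>\<^sup>+ x. ennreal (norm (W' x - W x) * (if Y x \<in> {k - 1, k} then 1 else 0)) \<partial>M)
             + (\<integral>\<^sup>+ x. ennreal (\<bar>g (W x)\<bar> * (\<bar>Rp x\<bar> + \<bar>Rm x\<bar>) * (if Y x \<in> {k - 1, k} then 1 else 0)) \<partial>M)"
    by (rule add_mono[OF Dbound Ebound])
  finally show ?thesis unfolding QL .
qed


lemma mv_meas[measurable]: "((*v) (S::real^'n^'m)) \<in> borel_measurable borel"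
  by (rule borel_measurable_continuous_onI[OF matrix_vector_mult_linear_continuous_on])

lemma L1_le_L2:
  fixes f :: "'a \<Rightarrow> real"
  assumes M: "prob_space M" and fi: "integrable M f" and f2: "integrable M (\<lambda>x. (f x)\<^sup>2)"
  shows "(integral\<^sup>L M f)\<^sup>2 \<le> integral\<^sup>L M (\<lambda>x. (f x)\<^sup>2)"
proof -
  interpret prob_space M by fact
  define c where "c = integral\<^sup>L M f"
  have "0 \<le> integral\<^sup>L M (\<lambda>x. (f x - c)\<^sup>2)" by simp
  also have "integral\<^sup>L M (\<lambda>x. (f x - c)\<^sup>2) = integral\<^sup>L M (\<lambda>x. (f x)\<^sup>2 - 2 * c * f x + c\<^sup>2)"
    by (rule arg_cong[where f="integral\<^sup>L M"]) (auto simp: power2_diff algebra_simps fun_eq_iff)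
  also have "\<dots> = integral\<^sup>L M (\<lambda>x. (f x)\<^sup>2) - 2 * c * c + c\<^sup>2"
    using fi f2 by (simp add: c_def prob_space)
  finally show ?thesis unfolding c_def by (simp add: power2_eq_square)
qed

lemma gauss_bound:
  fixes M :: "'a measure" and Z :: "'a \<Rightarrow> real^'d" and S :: "real^'d^'d"
  assumes M: "prob_space M"
    and Zm[measurable]: "Z \<in> borel_measurable M"
    and Z_indep_coords: "prob_space.indep_vars M (\<lambda>_. borel) (\<lambda>i x. Z x $ i) UNIV"
    and Z_normal: "\<And>i. distributed M lborel (\<lambda>x. Z x $ i) std_normal_density"
  shows "integrable M (\<lambda>x. norm (S *v Z x))"
    and "integral\<^sup>L M (\<lambda>x. norm (S *v Z x)) \<le> sqrt (\<Sum>i\<in>UNIV. \<Sum>j\<in>UNIV. (S $ i $ j)\<^sup>2)"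
proof -
  interpret prob_space M by fact
  have zi: "integrable M (\<lambda>x. Z x $ j)" for j
    using distributed_integrable[OF Z_normal[of j], of "\<lambda>x. x"] integrable_std_normal_moment[of 1]
    by (simp add: normal_density_nonneg)
  have z0: "integral\<^sup>L M (\<lambda>x. Z x $ j) = 0" for j
    by (rule standard_normal_distributed_expectation[OF Z_normal])
  have zsi: "integrable M (\<lambda>x. (Z x $ j)\<^sup>2)" for j
    using distributed_integrable[OF Z_normal[of j], of "\<lambda>x. x\<^sup>2"] integrable_std_normal_moment[of 2]
    by (simp add: normal_density_nonneg)
  have zs1: "integral\<^sup>L M (\<lambda>x. (Z x $ j)\<^sup>2) = 1" for j
    using distributed_integral[OF Z_normal[of j], of "\<lambda>x. x\<^sup>2"] integral_std_normal_moment_even[of 1]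
    by (simp add: normal_density_nonneg)
  have zz: "integrable M (\<lambda>x. Z x $ j * Z x $ l) \<and> integral\<^sup>L M (\<lambda>x. Z x $ j * Z x $ l) = (if j = l then 1 else 0)" for j l
  proof (cases "j = l")
    case True thus ?thesis using zsi[of j] zs1[of j] by (simp add: power2_eq_square)
  next
    case False
    have ind: "indep_vars (\<lambda>_. borel) (\<lambda>i x. Z x $ i) {j, l}"
      by (rule indep_vars_subset[OF Z_indep_coords]) auto
    have "integral\<^sup>L M (\<lambda>x. \<Prod>i\<in>{j,l}. Z x $ i) = (\<Prod>i\<in>{j,l}. integral\<^sup>L M (\<lambda>x. Z x $ i))"
      by (rule indep_vars_lebesgue_integral[OF _ ind]) (auto simp: zi)
    moreover have "integrable M (\<lambda>x. \<Prod>i\<in>{j,l}. Z x $ i)"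
      by (rule indep_vars_integrable[OF _ ind]) (auto simp: zi)
    ultimately show ?thesis using False by (simp add: z0)
  qed
  define X where "X x = S *v Z x" for x
  have Xm[measurable]: "X \<in> borel_measurable M" unfolding X_def[abs_def] by measurable
  have Xc: "X x $ i = (\<Sum>j\<in>UNIV. S $ i $ j * Z x $ j)" for x i
    unfolding X_def by (simp add: matrix_vector_mult_def)
  have nX: "(norm (X x))\<^sup>2 = (\<Sum>i\<in>UNIV. \<Sum>j\<in>UNIV. \<Sum>l\<in>UNIV. S $ i $ j * S $ i $ l * (Z x $ j * Z x $ l))" for x
  proof -
    have "(norm (X x))\<^sup>2 = (\<Sum>i\<in>UNIV. X x $ i * X x $ i)"
      by (simp add: power2_norm_eq_inner inner_vec_def)
    also have "\<dots> = (\<Sum>i\<in>UNIV. \<Sum>j\<in>UNIV. \<Sum>l\<in>UNIV. S $ i $ j * S $ i $ l * (Z x $ j * Z x $ l))"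
      unfolding Xc by (simp add: sum_product mult_ac)
    finally show ?thesis .
  qed
  have n2i: "integrable M (\<lambda>x. (norm (X x))\<^sup>2)"
    unfolding nX using zz by (intro Bochner_Integration.integrable_sum integrable_mult_right) auto
  have n2: "integral\<^sup>L M (\<lambda>x. (norm (X x))\<^sup>2) = (\<Sum>i\<in>UNIV. \<Sum>j\<in>UNIV. (S $ i $ j)\<^sup>2)"
  proof -
    have "integral\<^sup>L M (\<lambda>x. (norm (X x))\<^sup>2) = (\<Sum>i\<in>UNIV. \<Sum>j\<in>UNIV. \<Sum>l\<in>UNIV. S $ i $ j * S $ i $ l * (if j = l then 1 else 0))"
      unfolding nX using zz by (simp add: Bochner_Integration.integral_sum integrable_mult_right)
    also have "\<dots> = (\<Sum>i\<in>UNIV. \<Sum>j\<in>UNIV. (S $ i $ j)\<^sup>2)"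
      by (simp add: power2_eq_square if_distrib cong: if_cong)
    finally show ?thesis .
  qed
  have ni: "integrable M (\<lambda>x. norm (X x))"
  proof (rule Bochner_Integration.integrable_bound[of _ "\<lambda>x. 1 + (norm (X x))\<^sup>2"])
    show "integrable M (\<lambda>x. 1 + (norm (X x))\<^sup>2)" using n2i by simp
    show "AE x in M. norm (norm (X x)) \<le> norm (1 + (norm (X x))\<^sup>2)"
    proof (intro AE_I2)
      fix x
      have "norm (X x) \<le> 1 + (norm (X x))\<^sup>2"
      proof -
        have "0 \<le> (norm (X x) - 1)\<^sup>2" by simp
        hence "2 * norm (X x) \<le> (norm (X x))\<^sup>2 + 1" by (simp add: power2_diff)
        moreover have "0 \<le> (norm (X x))\<^sup>2" by simp
        ultimately show ?thesis by linarith
      qed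
      thus "norm (norm (X x)) \<le> norm (1 + (norm (X x))\<^sup>2)" by simp
    qed
  qed measurable
  thus "integrable M (\<lambda>x. norm (S *v Z x))" unfolding X_def .
  have "(integral\<^sup>L M (\<lambda>x. norm (X x)))\<^sup>2 \<le> (\<Sum>i\<in>UNIV. \<Sum>j\<in>UNIV. (S $ i $ j)\<^sup>2)"
    using L1_le_L2[OF M ni] n2i n2 by simp
  hence "integral\<^sup>L M (\<lambda>x. norm (X x)) \<le> sqrt (\<Sum>i\<in>UNIV. \<Sum>j\<in>UNIV. (S $ i $ j)\<^sup>2)"
    using real_le_rsqrt by blast
  thus "integral\<^sup>L M (\<lambda>x. norm (S *v Z x)) \<le> sqrt (\<Sum>i\<in>UNIV. \<Sum>j\<in>UNIV. (S $ i $ j)\<^sup>2)" unfolding X_def .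
qed




lemma sq_int_imp_int:
  fixes f :: "'a \<Rightarrow> real"
  assumes "prob_space M" "f \<in> borel_measurable M" "integrable M (\<lambda>x. (f x)\<^sup>2)"
  shows "integrable M f"
proof -
  interpret prob_space M by fact
  show ?thesis
  proof (rule Bochner_Integration.integrable_bound[of _ "\<lambda>x. 1 + (f x)\<^sup>2"])
    show "integrable M (\<lambda>x. 1 + (f x)\<^sup>2)" using assms(3) by simp
    show "AE x in M. norm (f x) \<le> norm (1 + (f x)\<^sup>2)"
    proof (intro AE_I2)
      fix x
      have "0 \<le> (\<bar>f x\<bar> - 1)\<^sup>2" by simp
      hence "2 * \<bar>f x\<bar> \<le> (f x)\<^sup>2 + 1" by (simp add: power2_diff)
      moreover have "0 \<le> (f x)\<^sup>2" by simp
      ultimately show "norm (f x) \<le> norm (1 + (f x)\<^sup>2)" by simp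
    qed
  qed (use assms in auto)
qed

lemma sq_int_prod:
  fixes f g :: "'a \<Rightarrow> real"
  assumes "f \<in> borel_measurable M" "g \<in> borel_measurable M"
    "integrable M (\<lambda>x. (f x)\<^sup>2)" "integrable M (\<lambda>x. (g x)\<^sup>2)"
  shows "integrable M (\<lambda>x. f x * g x)"
proof (rule Bochner_Integration.integrable_bound[of _ "\<lambda>x. (f x)\<^sup>2 + (g x)\<^sup>2"])
  show "integrable M (\<lambda>x. (f x)\<^sup>2 + (g x)\<^sup>2)" using assms by simp
  show "AE x in M. norm (f x * g x) \<le> norm ((f x)\<^sup>2 + (g x)\<^sup>2)"
  proof (intro AE_I2)
    fix x
    have "0 \<le> (\<bar>f x\<bar> - \<bar>g x\<bar>)\<^sup>2" by simp
    hence "2 * (\<bar>f x\<bar> * \<bar>g x\<bar>) \<le> (f x)\<^sup>2 + (g x)\<^sup>2" by (simp add: power2_diff)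
    moreover have "0 \<le> \<bar>f x\<bar> * \<bar>g x\<bar>" by simp
    ultimately have "\<bar>f x\<bar> * \<bar>g x\<bar> \<le> (f x)\<^sup>2 + (g x)\<^sup>2" by linarith
    thus "norm (f x * g x) \<le> norm ((f x)\<^sup>2 + (g x)\<^sup>2)" by (simp add: abs_mult)
  qed
qed (use assms in auto)

lemma sig_vimage:
  assumes "f \<in> M \<rightarrow>\<^sub>M N"
  shows "sigma_sets (space M) {f -` A \<inter> space M | A. A \<in> sets N} = sets (vimage_algebra (space M) f N)"
proof -
  have e: "sets (vimage_algebra (space M) f N) = {f -` A \<inter> space M |A. A \<in> sets N}"
    by (rule sets_vimage_algebra2) (use measurable_space[OF assms] in auto)
  have "sigma_sets (space (vimage_algebra (space M) f N)) (sets (vimage_algebra (space M) f N))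
        = sets (vimage_algebra (space M) f N)" by (rule sets.sigma_sets_eq)
  thus ?thesis unfolding e by simp
qed

lemma indep_var_from_vimage:
  fixes X :: "'a \<Rightarrow> 'b::topological_space" and Y :: "'a \<Rightarrow> 'c::topological_space"
    and F :: "'b \<Rightarrow> real" and G :: "'c \<Rightarrow> real"
  assumes M: "prob_space M"
    and ind: "prob_space.indep_set M (sets (vimage_algebra (space M) X borel)) (sets (vimage_algebra (space M) Y borel))"
    and Xm: "X \<in> M \<rightarrow>\<^sub>M borel" and Ym: "Y \<in> M \<rightarrow>\<^sub>M borel"
    and Fm: "F \<in> borel_measurable borel" and Gm: "G \<in> borel_measurable borel"
  shows "prob_space.indep_var M borel (\<lambda>x. F (X x)) borel (\<lambda>x. G (Y x))"
proof -
  interpret prob_space M by fact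
  have sub: "sigma_sets (space M) {(\<lambda>x. H (Z x)) -` A \<inter> space M | A. A \<in> sets borel} \<subseteq> sets (vimage_algebra (space M) Z borel)"
    if Zm: "Z \<in> M \<rightarrow>\<^sub>M borel" and Hm: "H \<in> borel_measurable borel"
    for Z :: "'a \<Rightarrow> 'e::topological_space" and H :: "'e \<Rightarrow> real"
  proof -
    have "{(\<lambda>x. H (Z x)) -` A \<inter> space M | A. A \<in> sets borel} \<subseteq> {Z -` B \<inter> space M | B. B \<in> sets borel}"
    proof (intro subsetI, elim CollectE exE conjE)
      fix s A assume s: "s = (\<lambda>x. H (Z x)) -` A \<inter> space M" and A: "A \<in> sets (borel :: real measure)"
      have "H -` A \<in> sets borel" using measurable_sets[OF Hm A] by simp
      moreover have "s = Z -` (H -` A) \<inter> space M" using s by auto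
      ultimately show "s \<in> {Z -` B \<inter> space M | B. B \<in> sets borel}" by blast
    qed
    hence "sigma_sets (space M) {(\<lambda>x. H (Z x)) -` A \<inter> space M | A. A \<in> sets borel}
        \<subseteq> sigma_sets (space M) {Z -` B \<inter> space M | B. B \<in> sets borel}"
      by (rule sigma_sets_mono')
    also have "\<dots> = sets (vimage_algebra (space M) Z borel)" by (rule sig_vimage[OF Zm])
    finally show ?thesis .
  qed
  have i: "indep_set (sets (vimage_algebra (space M) X borel)) (sets (vimage_algebra (space M) Y borel))"
    using ind .
  show ?thesis
    unfolding indep_var_eq
  proof (intro conjI)
    show "random_variable borel (\<lambda>x. F (X x))" using Xm Fm by measurable
    show "random_variable borel (\<lambda>x. G (Y x))" using Ym Gm by measurable
    show "indep_set (sigma_sets (space M) {(\<lambda>x. F (X x)) -` A \<inter> space M |A. A \<in> sets borel})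
                    (sigma_sets (space M) {(\<lambda>x. G (Y x)) -` A \<inter> space M |A. A \<in> sets borel})"
      using i sub[OF Xm Fm] sub[OF Ym Gm] unfolding indep_sets2_eq by blast
  qed
qed

theorem lemma5p1:
  fixes M :: "'a measure"
    and W W' :: "'a \<Rightarrow> real^'d"
    and Y Y' Rp Rm :: "'a \<Rightarrow> real"
    and Z :: "'a \<Rightarrow> real^'d"
    and \<Sigma> :: "real^'d^'d"
    and \<sigma>Y2 \<zeta> lam Q :: real
  assumes M: "prob_space M"
    and meas: "W \<in> borel_measurable M" "W' \<in> borel_measurable M"
              "Y \<in> borel_measurable M" "Y' \<in> borel_measurable M"
              "Rp \<in> borel_measurable M" "Rm \<in> borel_measurable M"
              "Z \<in> borel_measurable M"
    and W_sq: "\<And>i. integrable M (\<lambda>x. (W x $ i)\<^sup>2)"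
    and W_mean: "\<And>i. integral\<^sup>L M (\<lambda>x. W x $ i) = 0"
    and Sigma_def: "\<Sigma> = (\<chi> i j. integral\<^sup>L M (\<lambda>x. W x $ i * W x $ j))"
    and Sigma_inv: "invertible \<Sigma>"
    and Y_sq: "integrable M (\<lambda>x. (Y x)\<^sup>2)"
    and Y_mean: "integral\<^sup>L M Y = 0"
    and Y_var: "\<sigma>Y2 = integral\<^sup>L M (\<lambda>x. (Y x)\<^sup>2)"
    and uncorr: "\<And>i. integral\<^sup>L M (\<lambda>x. W x $ i * Y x) = 0"
    and exch: "distr M borel (\<lambda>x. (W x, Y x, W' x, Y' x))
               = distr M borel (\<lambda>x. (W' x, Y' x, W x, Y x))"
    and zeta: "0 \<le> \<zeta>" "\<zeta> < 1"
    and lattice: "AE x in M. Y x - \<zeta> \<in> \<int>"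
    and dY: "AE x in M. Y' x - Y x \<in> {-1, 0, 1}"
    and lam: "0 < lam" "lam < 1"
    and Q_def: "Q = lam * \<sigma>Y2"
    and cond_p: "AE x in M. real_cond_exp M (vimage_algebra (space M) (\<lambda>x. (W x, Y x)) borel)
                   (indicator {x \<in> space M. Y' x - Y x = 1}) x = Q + Rp x"
    and cond_m: "AE x in M. real_cond_exp M (vimage_algebra (space M) (\<lambda>x. (W x, Y x)) borel)
                   (indicator {x \<in> space M. Y' x - Y x = -1}) x = Q + Rm x"
    and Z_indep_coords: "prob_space.indep_vars M (\<lambda>_. borel) (\<lambda>i x. Z x $ i) UNIV"
    and Z_normal: "\<And>i. distributed M lborel (\<lambda>x. Z x $ i) std_normal_density"
    and Z_indep: "prob_space.indep_set M (sets (vimage_algebra (space M) Z borel))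
                   (sets (vimage_algebra (space M) (\<lambda>x. (W x, Y x, W' x, Y' x, Rp x, Rm x)) borel))"
  shows "\<forall>h :: real^'d \<Rightarrow> real. \<forall>k :: real.
           1-lipschitz_on UNIV h \<longrightarrow>
           measure M {x \<in> space M. Y x = k} > 0 \<longrightarrow>
           measure M {x \<in> space M. Y x = k - 1} > 0 \<longrightarrow>
           ennreal \<bar>integral\<^sup>L M (\<lambda>x. (h (W x) - h (matrix_sqrt \<Sigma> *v Z x)) *
                 ((if Y x = k then 1 else 0) - (if Y x = k - 1 then 1 else 0)))\<bar>
           \<le> ennreal (1 / Q) * (\<integral>\<^sup>+ x. ennreal (norm (W' x - W x) *
                   (if Y x \<in> {k - 1, k} then 1 else 0)) \<partial>M)
             + ennreal (1 / Q) * (\<integral>\<^sup>+ x. ennreal ((norm (W x) + sqrt (trace \<Sigma>)) *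
                   (\<bar>Rp x\<bar> + \<bar>Rm x\<bar>) * (if Y x \<in> {k - 1, k} then 1 else 0)) \<partial>M)"
proof (intro allI impI)
  fix h :: "real^'d \<Rightarrow> real" and k :: real
  assume lip: "1-lipschitz_on UNIV h"
    and pk: "measure M {x \<in> space M. Y x = k} > 0"
    and pk1: "measure M {x \<in> space M. Y x = k - 1} > 0"
  interpret prob_space M by fact
  note meas[measurable]
  have Wim[measurable]: "(\<lambda>x. W x $ i) \<in> borel_measurable M" for i
    using measurable_comp[OF meas(1) borel_measurable_nth[of i]] by (simp add: comp_def)
  have Wi: "integrable M (\<lambda>x. W x $ i)" for i
    by (rule sq_int_imp_int[OF M _ W_sq]) measurable
  have WW: "integrable M (\<lambda>x. W x $ i * W x $ j)" for i j
    by (rule sq_int_prod[OF Wim Wim W_sq W_sq])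
  have nWi: "integrable M (\<lambda>x. norm (W x))"
  proof (rule Bochner_Integration.integrable_bound[of _ "\<lambda>x. \<Sum>i\<in>UNIV. \<bar>W x $ i\<bar>"])
    show "integrable M (\<lambda>x. \<Sum>i\<in>UNIV. \<bar>W x $ i\<bar>)" using Wi by auto
    show "AE x in M. norm (norm (W x)) \<le> norm (\<Sum>i\<in>UNIV. \<bar>W x $ i\<bar>)"
      by (intro AE_I2) (simp add: norm_le_l1_cart)
  qed measurable
  have sSig: "transpose \<Sigma> = \<Sigma>"
    unfolding Sigma_def by (simp add: transpose_def vec_eq_iff mult.commute)
  have pSig: "0 \<le> x \<bullet> (\<Sigma> *v x)" for x
  proof -
    have "x \<bullet> (\<Sigma> *v x) = (\<Sum>i\<in>UNIV. \<Sum>j\<in>UNIV. x $ i * x $ j * integral\<^sup>L M (\<lambda>y. W y $ i * W y $ j))"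
      unfolding Sigma_def by (simp add: inner_vec_def matrix_vector_mult_def sum_distrib_left mult_ac)
    also have "\<dots> = integral\<^sup>L M (\<lambda>y. \<Sum>i\<in>UNIV. \<Sum>j\<in>UNIV. x $ i * x $ j * (W y $ i * W y $ j))"
      using WW by (simp add: Bochner_Integration.integral_sum integrable_mult_right)
    also have "\<dots> = integral\<^sup>L M (\<lambda>y. (\<Sum>i\<in>UNIV. x $ i * W y $ i)\<^sup>2)"
      by (simp add: power2_eq_square sum_product mult_ac)
    also have "\<dots> \<ge> 0" by simp
    finally show ?thesis .
  qed
  have psdSig: "psd_matrix \<Sigma>" unfolding psd_matrix_def using sSig pSig by auto
  define S where "S = matrix_sqrt \<Sigma>"
  have Sp: "psd_matrix S" and SS: "S ** S = \<Sigma>" using matrix_sqrt_props[OF psdSig] unfolding S_def by auto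
  have sS: "transpose S = S" using Sp unfolding psd_matrix_def by auto
  have trS: "(\<Sum>i\<in>UNIV. \<Sum>j\<in>UNIV. (S $ i $ j)\<^sup>2) = trace \<Sigma>"
  proof -
    have "trace \<Sigma> = (\<Sum>i\<in>UNIV. \<Sum>j\<in>UNIV. S $ i $ j * S $ j $ i)"
      unfolding SS[symmetric] trace_def by (simp add: matrix_matrix_mult_def)
    also have "\<dots> = (\<Sum>i\<in>UNIV. \<Sum>j\<in>UNIV. (S $ i $ j)\<^sup>2)"
    proof -
      have "S $ j $ i = S $ i $ j" for i j using sS by (metis transpose_def vec_lambda_beta)
      thus ?thesis by (simp add: power2_eq_square)
    qed
    finally show ?thesis by simp
  qed
  have SZi: "integrable M (\<lambda>x. norm (S *v Z x))"
    and SZb: "integral\<^sup>L M (\<lambda>x. norm (S *v Z x)) \<le> sqrt (trace \<Sigma>)"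
    using gauss_bound[OF M meas(7) Z_indep_coords Z_normal, of S] trS by auto
  have hl: "\<bar>h a - h b\<bar> \<le> norm (a - b)" for a b
    using lipschitz_onD[OF lip, of a b] by (simp add: dist_norm dist_real_def)
  have hm[measurable]: "h \<in> borel_measurable borel"
    by (rule borel_measurable_continuous_onI[OF lipschitz_on_continuous_on[OF lip]])
  have hSZi: "integrable M (\<lambda>x. h (S *v Z x))"
  proof (rule Bochner_Integration.integrable_bound[of _ "\<lambda>x. \<bar>h 0\<bar> + norm (S *v Z x)"])
    show "integrable M (\<lambda>x. \<bar>h 0\<bar> + norm (S *v Z x))" using SZi by simp
    show "AE x in M. norm (h (S *v Z x)) \<le> norm (\<bar>h 0\<bar> + norm (S *v Z x))"
    proof (intro AE_I2)
      fix x
      have "\<bar>h (S *v Z x) - h 0\<bar> \<le> norm (S *v Z x)" using hl[of "S *v Z x" 0] by simp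
      moreover have "\<bar>h (S *v Z x)\<bar> - \<bar>h 0\<bar> \<le> \<bar>h (S *v Z x) - h 0\<bar>" by (rule abs_triangle_ineq2)
      ultimately show "norm (h (S *v Z x)) \<le> norm (\<bar>h 0\<bar> + norm (S *v Z x))" by simp
    qed
  qed measurable
  define c where "c = integral\<^sup>L M (\<lambda>x. h (S *v Z x))"
  have gb: "\<bar>h w - c\<bar> \<le> norm w + sqrt (trace \<Sigma>)" for w
  proof -
    have "\<bar>h w - c\<bar> = \<bar>integral\<^sup>L M (\<lambda>x. h w - h (S *v Z x))\<bar>"
      unfolding c_def using hSZi by (simp add: prob_space)
    also have "\<dots> \<le> integral\<^sup>L M (\<lambda>x. \<bar>h w - h (S *v Z x)\<bar>)"
      by (rule integral_abs_bound)
    also have "\<dots> \<le> integral\<^sup>L M (\<lambda>x. norm w + norm (S *v Z x))"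
    proof (rule integral_mono)
      show "integrable M (\<lambda>x. \<bar>h w - h (S *v Z x)\<bar>)" using hSZi by auto
      show "integrable M (\<lambda>x. norm w + norm (S *v Z x))" using SZi by auto
      fix x show "\<bar>h w - h (S *v Z x)\<bar> \<le> norm w + norm (S *v Z x)"
        using hl[of w "S *v Z x"] norm_triangle_ineq4[of w "S *v Z x"] by linarith
    qed
    also have "\<dots> = norm w + integral\<^sup>L M (\<lambda>x. norm (S *v Z x))" using SZi by (simp add: prob_space)
    also have "\<dots> \<le> norm w + sqrt (trace \<Sigma>)" using SZb by simp
    finally show ?thesis .
  qed
  define \<phi> where "\<phi> y = (if y = k then 1 else 0) - (if y = k - 1 then 1 else (0::real))" for y
  have \<phi>m[measurable]: "\<phi> \<in> borel_measurable borel" unfolding \<phi>_def[abs_def] by measurable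
  have \<phi>b: "\<bar>\<phi> y\<bar> \<le> 1" for y unfolding \<phi>_def by auto
  have \<phi>i: "integrable M (\<lambda>x. \<phi> (Y x))"
    by (rule Bochner_Integration.integrable_bound[of _ "\<lambda>_. 1::real"]) (auto intro!: AE_I2 simp: \<phi>b)
  define Ov where "Ov x = (W x, Y x, W' x, Y' x, Rp x, Rm x)" for x
  have Om: "Ov \<in> M \<rightarrow>\<^sub>M borel" unfolding Ov_def[abs_def] borel_prod[symmetric] by measurable
  have ph_m: "(\<lambda>p::(real^'d) \<times> real \<times> (real^'d) \<times> real \<times> real \<times> real. \<phi> (fst (snd p))) \<in> borel_measurable borel"
    unfolding borel_prod[symmetric] by measurable
  have hSm: "(\<lambda>v. h (S *v v)) \<in> borel_measurable borel" by measurable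
  have ind3: "indep_var borel (\<lambda>x. h (S *v Z x)) borel (\<lambda>x. \<phi> (Y x))"
    using indep_var_from_vimage[OF M _ meas(7) Om hSm ph_m] Z_indep unfolding Ov_def[abs_def] by simp
  have indI: "integral\<^sup>L M (\<lambda>x. h (S *v Z x) * \<phi> (Y x)) = c * integral\<^sup>L M (\<lambda>x. \<phi> (Y x))"
    unfolding c_def by (rule indep_var_lebesgue_integral[OF ind3 hSZi \<phi>i])
  have indJ: "integrable M (\<lambda>x. h (S *v Z x) * \<phi> (Y x))"
    by (rule indep_var_integrable[OF ind3 hSZi \<phi>i])
  have hWi: "integrable M (\<lambda>x. h (W x))"
  proof (rule Bochner_Integration.integrable_bound[of _ "\<lambda>x. \<bar>h 0\<bar> + norm (W x)"])
    show "integrable M (\<lambda>x. \<bar>h 0\<bar> + norm (W x))" using nWi by simp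
    show "AE x in M. norm (h (W x)) \<le> norm (\<bar>h 0\<bar> + norm (W x))"
    proof (intro AE_I2)
      fix x
      have "\<bar>h (W x) - h 0\<bar> \<le> norm (W x)" using hl[of "W x" 0] by simp
      moreover have "\<bar>h (W x)\<bar> - \<bar>h 0\<bar> \<le> \<bar>h (W x) - h 0\<bar>" by (rule abs_triangle_ineq2)
      ultimately show "norm (h (W x)) \<le> norm (\<bar>h 0\<bar> + norm (W x))" by simp
    qed
  qed measurable
  have hW\<phi>i: "integrable M (\<lambda>x. h (W x) * \<phi> (Y x))"
    by (rule Bochner_Integration.integrable_bound[OF hWi]) (auto simp: abs_mult intro!: mult_left_le[OF \<phi>b])
  define L where "L = integral\<^sup>L M (\<lambda>x. (h (W x) - c) * ((if Y x = k then 1 else 0) - (if Y x = k - 1 then 1 else 0)))"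
  have LHS: "integral\<^sup>L M (\<lambda>x. (h (W x) - h (S *v Z x)) * ((if Y x = k then 1 else 0) - (if Y x = k - 1 then 1 else 0))) = L"
  proof -
    have "integral\<^sup>L M (\<lambda>x. (h (W x) - h (S *v Z x)) * ((if Y x = k then 1 else 0) - (if Y x = k - 1 then 1 else 0)))
        = integral\<^sup>L M (\<lambda>x. h (W x) * \<phi> (Y x) - h (S *v Z x) * \<phi> (Y x))"
      by (simp add: \<phi>_def algebra_simps)
    also have "\<dots> = integral\<^sup>L M (\<lambda>x. h (W x) * \<phi> (Y x)) - c * integral\<^sup>L M (\<lambda>x. \<phi> (Y x))"
      using hW\<phi>i indJ indI by simp
    also have "\<dots> = integral\<^sup>L M (\<lambda>x. h (W x) * \<phi> (Y x) - c * \<phi> (Y x))"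
      using hW\<phi>i \<phi>i by simp
    also have "\<dots> = L" unfolding L_def by (simp add: \<phi>_def algebra_simps)
    finally show ?thesis .
  qed
  have Ym[measurable]: "Y \<in> borel_measurable M" by (rule meas(3))
  have lowb: "a\<^sup>2 * measure M {x \<in> space M. Y x = a} \<le> \<sigma>Y2" for a
  proof -
    define A where "A = {x \<in> space M. Y x = a}"
    have A[measurable]: "A \<in> sets M" unfolding A_def by measurable
    have e1: "integral\<^sup>L M (\<lambda>x. a\<^sup>2 * indicator A x) = a\<^sup>2 * measure M A"
      using A by (simp add: emeasure_eq_measure)
    have "a\<^sup>2 * measure M A = integral\<^sup>L M (\<lambda>x. (Y x)\<^sup>2 * indicator A x)"
      unfolding e1[symmetric]
      by (rule Bochner_Integration.integral_cong[OF refl]) (auto simp: A_def indicator_def)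
    also have "\<dots> \<le> integral\<^sup>L M (\<lambda>x. (Y x)\<^sup>2)"
    proof (rule integral_mono)
      show "integrable M (\<lambda>x. (Y x)\<^sup>2 * indicator A x)"
        by (rule Bochner_Integration.integrable_bound[OF Y_sq]) (measurable, auto intro!: AE_I2 simp: indicator_def)
      show "integrable M (\<lambda>x. (Y x)\<^sup>2)" by (rule Y_sq)
    qed (auto simp: indicator_def)
    finally show ?thesis unfolding A_def Y_var .
  qed
  have sig_pos: "\<sigma>Y2 > 0"
  proof (cases "k = 0")
    case True
    have "0 < (k - 1)\<^sup>2 * measure M {x \<in> space M. Y x = k - 1}" using True pk1 by simp
    thus ?thesis using lowb[of "k - 1"] by linarith
  next
    case False
    have "0 < k\<^sup>2 * measure M {x \<in> space M. Y x = k}" using False pk by simp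
    thus ?thesis using lowb[of k] by linarith
  qed
  have Qpos: "Q > 0" unfolding Q_def using lam sig_pos by simp
  define g where "g w = h w - c" for w
  have gm: "g \<in> borel_measurable borel" unfolding g_def[abs_def] by measurable
  have gl: "\<bar>g a - g b\<bar> \<le> norm (a - b)" for a b unfolding g_def using hl[of a b] by simp
  have gi: "integrable M (\<lambda>x. g (W x))" unfolding g_def using hWi by simp
  have C: "ennreal (\<bar>Q * integral\<^sup>L M (\<lambda>x. g (W x) *
                 ((if Y x = k then 1 else 0) - (if Y x = k - 1 then 1 else 0)))\<bar>)
           \<le> (\<integral>\<^sup>+ x. ennreal (norm (W' x - W x) * (if Y x \<in> {k - 1, k} then 1 else 0)) \<partial>M)
             + (\<integral>\<^sup>+ x. ennreal (\<bar>g (W x)\<bar> * (\<bar>Rp x\<bar> + \<bar>Rm x\<bar>) * (if Y x \<in> {k - 1, k} then 1 else 0)) \<partial>M)"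
    by (rule core[OF M meas(1-6) gm gl gi exch cond_p cond_m])
  have CL: "integral\<^sup>L M (\<lambda>x. g (W x) * ((if Y x = k then 1 else 0) - (if Y x = k - 1 then 1 else 0))) = L"
    unfolding L_def g_def ..
  define X1 where "X1 = (\<integral>\<^sup>+ x. ennreal (norm (W' x - W x) * (if Y x \<in> {k - 1, k} then 1 else 0)) \<partial>M)"
  define X2 where "X2 = (\<integral>\<^sup>+ x. ennreal ((norm (W x) + sqrt (trace \<Sigma>)) *
                   (\<bar>Rp x\<bar> + \<bar>Rm x\<bar>) * (if Y x \<in> {k - 1, k} then 1 else 0)) \<partial>M)"
  have X2g: "(\<integral>\<^sup>+ x. ennreal (\<bar>g (W x)\<bar> * (\<bar>Rp x\<bar> + \<bar>Rm x\<bar>) * (if Y x \<in> {k - 1, k} then 1 else 0)) \<partial>M) \<le> X2"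
    unfolding X2_def
  proof (intro nn_integral_mono ennreal_leI)
    fix x
    have "\<bar>g (W x)\<bar> \<le> norm (W x) + sqrt (trace \<Sigma>)" unfolding g_def by (rule gb)
    moreover have "0 \<le> (\<bar>Rp x\<bar> + \<bar>Rm x\<bar>) * (if Y x \<in> {k - 1, k} then 1 else (0::real))" by simp
    ultimately have "\<bar>g (W x)\<bar> * ((\<bar>Rp x\<bar> + \<bar>Rm x\<bar>) * (if Y x \<in> {k - 1, k} then 1 else 0))
        \<le> (norm (W x) + sqrt (trace \<Sigma>)) * ((\<bar>Rp x\<bar> + \<bar>Rm x\<bar>) * (if Y x \<in> {k - 1, k} then 1 else 0))"
      by (rule mult_right_mono)
    thus "\<bar>g (W x)\<bar> * (\<bar>Rp x\<bar> + \<bar>Rm x\<bar>) * (if Y x \<in> {k - 1, k} then 1 else 0)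
        \<le> (norm (W x) + sqrt (trace \<Sigma>)) * (\<bar>Rp x\<bar> + \<bar>Rm x\<bar>) * (if Y x \<in> {k - 1, k} then 1 else 0)"
      by (simp add: mult.assoc)
  qed
  have QL: "ennreal \<bar>Q * L\<bar> \<le> X1 + X2"
    using C X2g unfolding CL X1_def[symmetric] by (meson add_left_mono order.trans)
  have "ennreal \<bar>L\<bar> = ennreal (1 / Q) * ennreal \<bar>Q * L\<bar>"
  proof -
    have "\<bar>L\<bar> = (1 / Q) * \<bar>Q * L\<bar>" using Qpos by (simp add: abs_mult)
    thus ?thesis using Qpos by (simp add: ennreal_mult[symmetric])
  qed
  also have "\<dots> \<le> ennreal (1 / Q) * (X1 + X2)" by (rule mult_left_mono[OF QL]) simp
  also have "\<dots> = ennreal (1 / Q) * X1 + ennreal (1 / Q) * X2" by (simp add: distrib_left)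
  finally have final: "ennreal \<bar>L\<bar> \<le> ennreal (1 / Q) * X1 + ennreal (1 / Q) * X2" .
  show "ennreal \<bar>integral\<^sup>L M (\<lambda>x. (h (W x) - h (matrix_sqrt \<Sigma> *v Z x)) *
                 ((if Y x = k then 1 else 0) - (if Y x = k - 1 then 1 else 0)))\<bar>
           \<le> ennreal (1 / Q) * (\<integral>\<^sup>+ x. ennreal (norm (W' x - W x) *
                   (if Y x \<in> {k - 1, k} then 1 else 0)) \<partial>M)
             + ennreal (1 / Q) * (\<integral>\<^sup>+ x. ennreal ((norm (W x) + sqrt (trace \<Sigma>)) *
                   (\<bar>Rp x\<bar> + \<bar>Rm x\<bar>) * (if Y x \<in> {k - 1, k} then 1 else 0)) \<partial>M)"
    using final LHS unfolding S_def X1_def X2_def by simp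
qed


end
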